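(* Let $1\le p\le\infty$ and let $A=\{[x_i^a,y_i^a]\}_{i=1}^{n_a}$ and $B=\{[x_i^b,y_i^b]\}_{i=1}^{n_b}$ be persistence barcodes in $\mathcal{B}_F$ with positive total lengths $L_a,L_b>0$. If the relative error satisfies $r_p(A,B)<1/4$, then $$|E(A)-E(B)|\le 2r_p(A,B)\left[\log(n_{\max})-\log\big(2r_p(A,B)\big)\right].$$
   Context: A persistence barcode is a finite multiset of intervals $[x,y]$ with $x\le y$; $\mathcal{B}_F$ denotes the set of persistence barcodes all of whose intervals have finite endpoints ($x,y\in\mathbb{R}$). For $A=\{[x_i^a,y_i^a]\}_{i=1}^{n_a}$ write $\ell_i^a=y_i^a-x_i^a$ and $L_a=\sum_i\ell_i^a$; similarly for $B$. Put $n_{\max}=\max\{n_a,n_b\}$, $L_{\max}=\max\{L_a,L_b\}$. The $p$-th Wasserstein distance: if $n_a\neq n_b$, add intervals of zero length $[t,t]$ to the smaller barcode until both have $n_{\max}$ intervals; then for $1\le p<\infty$, $d_p(A,B)=\big(\min_\gamma\sum_{i=1}^{n_{\max}}\max\{|x_i^a-x^b_{\gamma(i)}|^p,|y_i^a-y^b_{\gamma(i)}|^p\}\big)^{1/p}$ and $d_\infty(A,B)=\min_\gamma\max_i\max\{|x_i^a-x^b_{\gamma(i)}|,|y_i^a-y^b_{\gamma(i)}|\}$, the minimum being over bijections $\gamma$ between the (padded) multisets (and the choices of added zero-length intervals). The persistent entropy of $A\in\mathcal{B}_F$ with $L_a>0$ is $E(A)=-\sum_{i=1}^{n_a}\frac{\ell_i^a}{L_a}\log\frac{\ell_i^a}{L_a}$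 (with $0\log 0=0$). The relative error is $r_p(A,B)=\dfrac{2\,n_{\max}^{1-1/p}\,d_p(A,B)}{L_{\max}}$, where $n_{\max}^{1-1/\infty}=n_{\max}$. Convention: $0\log 0=0$. *)

theory Defs
  imports "HOL-Analysis.Analysis" "HOL-Library.Multiset" "HOL-Library.Extended_Real"
begin

type_synonym barcode = "(real \<times> real) multiset"

definition is_barcode :: "barcode \<Rightarrow> bool" where
  "is_barcode A \<longleftrightarrow> (\<forall>I \<in># A. fst I \<le> snd I)"

definition total_length :: "barcode \<Rightarrow> real" where
  "total_length A = (\<Sum>I\<in>#A. snd I - fst I)"

definition n_max :: "barcode \<Rightarrow> barcode \<Rightarrow> nat" where
  "n_max A B = max (size A) (size B)"

definition L_max :: "barcode \<Rightarrow> barcode \<Rightarrow> real" where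
  "L_max A B = max (total_length A) (total_length B)"

definition padded :: "nat \<Rightarrow> barcode \<Rightarrow> (real \<times> real) list set" where
  "padded n A = {xs. length xs = n \<and> (\<exists>ts. mset xs = A + mset (map (\<lambda>t. (t, t)) ts))}"

definition int_dist :: "real \<times> real \<Rightarrow> real \<times> real \<Rightarrow> real" where
  "int_dist I J = max \<bar>fst I - fst J\<bar> \<bar>snd I - snd J\<bar>"

definition wasserstein :: "real \<Rightarrow> barcode \<Rightarrow> barcode \<Rightarrow> real" where
  "wasserstein p A B =
     (let n = n_max A B in
      (Inf {(\<Sum>i<n. (int_dist (xs ! i) (ys ! \<gamma> i)) powr p) | xs ys \<gamma>.
              xs \<in> padded n A \<and> ys \<in> padded n B \<and> bij_betw \<gamma> {..<n} {..<n}}) powr (1 / p))"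

definition wasserstein_inf :: "barcode \<Rightarrow> barcode \<Rightarrow> real" where
  "wasserstein_inf A B =
     (let n = n_max A B in
      Inf {(MAX i\<in>{..<n}. int_dist (xs ! i) (ys ! \<gamma> i)) | xs ys \<gamma>.
              xs \<in> padded n A \<and> ys \<in> padded n B \<and> bij_betw \<gamma> {..<n} {..<n}})"

definition wdist :: "ereal \<Rightarrow> barcode \<Rightarrow> barcode \<Rightarrow> real" where
  "wdist p A B = (if p = \<infinity> then wasserstein_inf A B else wasserstein (real_of_ereal p) A B)"

definition pers_entropy :: "barcode \<Rightarrow> real" where
  "pers_entropy A = - (\<Sum>I\<in>#A. (let q = (snd I - fst I) / total_length A in
                                   if q = 0 then 0 else q * ln q))"

text \<open>Relative error r_p(A,B); for p = \<infinity> the factor n_max^(1-1/p) is n_max.\<close>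
definition rel_err :: "ereal \<Rightarrow> barcode \<Rightarrow> barcode \<Rightarrow> real" where
  "rel_err p A B =
     2 * (if p = \<infinity> then real (n_max A B) else real (n_max A B) powr (1 - 1 / real_of_ereal p))
       * wdist p A B / L_max A B"

end

theory Submission
  imports Defs "HOL-Real_Asymp.Real_Asymp"
begin


definition eta :: "real \<Rightarrow> real" where "eta x = - (x * ln x)"

lemma eta_nonneg: "0 \<le> x \<Longrightarrow> x \<le> 1 \<Longrightarrow> 0 \<le> eta x"
  unfolding eta_def
  by (cases "x = 0") (auto simp: mult_nonneg_nonpos)

lemma ln_le_m1: fixes t :: real assumes "0 < t" "t \<le> 1/4" shows "ln t \<le> -1"
proof -
  have "ln t \<le> ln (1/4)" using assms by simp
  also have "ln (1/4::real) = - ln 4" by (simp add: ln_div)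
  moreover have "ln (4::real) \<ge> 1"
  proof -
    have "exp 1 \<le> (4::real)" using exp_le by linarith
    then have "ln (exp 1) \<le> ln (4::real)" by (subst ln_le_cancel_iff) auto
    thus ?thesis by simp
  qed
  ultimately show ?thesis by linarith
qed

lemma eta_ge_t: fixes t :: real assumes "0 \<le> t" "t \<le> 1/4" shows "t \<le> eta t"
proof (cases "t = 0")
  case False
  then have "ln t \<le> -1" using ln_le_m1 assms by auto
  then have "t * ln t \<le> t * (-1)" using assms by (intro mult_left_mono) auto
  then show ?thesis unfolding eta_def by linarith
qed (simp add: eta_def)

lemma eta_ordered:
  assumes "0 \<le> a" "a \<le> b" "b \<le> 1" "b - a \<le> 1/4"
  shows "\<bar>eta a - eta b\<bar> \<le> eta (b - a)"
proof -
  define t where "t = b - a"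
  have t: "0 \<le> t" "t \<le> 1/4" "b = a + t" using assms by (auto simp: t_def)
  have i: "eta b - eta a \<le> eta t"
  proof -
    have "a * ln a \<le> a * ln b"
      using assms by (cases "a = 0") (auto intro!: mult_left_mono)
    moreover have "t * ln t \<le> t * ln b"
      using t assms by (cases "t = 0") (auto intro!: mult_left_mono)
    ultimately show ?thesis unfolding eta_def using t by (simp add: algebra_simps)
  qed
  have ii: "eta a - eta b \<le> eta t"
  proof (cases "a = 0")
    case True
    have "b * ln b \<le> 0" using assms by (cases "b = 0") (auto simp: mult_nonneg_nonpos)
    then show ?thesis using True eta_nonneg[of t] t unfolding eta_def by auto
  next
    case False
    then have a0: "0 < a" using assms by auto
    have "ln (b / a) \<le> b / a - 1" using a0 assms by (intro ln_le_minus_one) auto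
    then have "a * ln (b/a) \<le> a * (b/a - 1)" using a0 by (intro mult_left_mono) auto
    also have "\<dots> = t" using a0 t by (simp add: field_simps)
    finally have 1: "a * (ln b - ln a) \<le> t" using a0 assms by (simp add: ln_div)
    have "t * ln b \<le> 0" using t assms a0 by (intro mult_nonneg_nonpos) auto
    then have "eta a - eta b \<le> t" unfolding eta_def using 1 t by (simp add: algebra_simps)
    then show ?thesis using eta_ge_t[OF t(1,2)] by linarith
  qed
  show ?thesis using i ii unfolding t_def by linarith
qed

lemma eta_term:
  assumes "0 \<le> a" "a \<le> 1" "0 \<le> b" "b \<le> 1" "\<bar>a - b\<bar> \<le> 1/4"
  shows "\<bar>eta a - eta b\<bar> \<le> eta \<bar>a - b\<bar>"
proof (cases "a \<le> b")
  case True then show ?thesis using eta_ordered[of a b] assms by auto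
next
  case False then show ?thesis using eta_ordered[of b a] assms by (auto simp: abs_minus_commute)
qed

lemma eta_tangent: assumes "0 \<le> t" "0 < u" shows "eta t \<le> u - t - t * ln u"
proof (cases "t = 0")
  case False
  then have t0: "0 < t" using assms by auto
  have "ln (u / t) \<le> u / t - 1" using t0 assms by (intro ln_le_minus_one) auto
  then have "t * ln (u/t) \<le> t * (u/t - 1)" using t0 by (intro mult_left_mono) auto
  then have "t * (ln u - ln t) \<le> u - t" using t0 assms by (simp add: ln_div right_diff_distrib)
  then show ?thesis by (simp add: eta_def algebra_simps)
qed (use assms in \<open>simp add: eta_def\<close>)



lemma quarter_aux: "2*\<bar>x::real\<bar> \<le> s \<Longrightarrow> s < 1/2 \<Longrightarrow> \<bar>x\<bar> \<le> 1/4" by linarith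

lemma half_bound:
  fixes a b :: "nat \<Rightarrow> real"
  assumes sa: "(\<Sum>i<n. a i) = 1" and sb: "(\<Sum>i<n. b i) = 1" and k: "k < n"
  shows "2 * \<bar>a k - b k\<bar> \<le> (\<Sum>i<n. \<bar>a i - b i\<bar>)"
proof -
  have fin: "finite {..<n}" by simp
  have kin: "k \<in> {..<n}" using k by simp
  have e1: "(\<Sum>i<n. \<bar>a i - b i\<bar>) = \<bar>a k - b k\<bar> + (\<Sum>i\<in>{..<n}-{k}. \<bar>a i - b i\<bar>)"
    using sum.remove[OF fin kin] by simp
  have e2: "(\<Sum>i\<in>{..<n}-{k}. a i - b i) = b k - a k"
  proof -
    have "(\<Sum>i<n. a i - b i) = (a k - b k) + (\<Sum>i\<in>{..<n}-{k}. a i - b i)"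
      using sum.remove[OF fin kin, of "\<lambda>i. a i - b i"] by simp
    moreover have "(\<Sum>i<n. a i - b i) = 0" using sa sb by (simp add: sum_subtractf)
    ultimately show ?thesis by linarith
  qed
  have "\<bar>b k - a k\<bar> \<le> (\<Sum>i\<in>{..<n}-{k}. \<bar>a i - b i\<bar>)"
    using sum_abs[of "\<lambda>i. a i - b i" "{..<n}-{k}"] e2 by simp
  then show ?thesis using e1 by (simp add: abs_minus_commute)
qed

lemma le_one_of_sum:
  fixes a :: "nat \<Rightarrow> real"
  assumes a0: "\<And>i. i < n \<Longrightarrow> 0 \<le> a i" and sa: "(\<Sum>i<n. a i) = 1" and k: "k < n"
  shows "a k \<le> 1"
  using member_le_sum[of k "{..<n}" a] a0 k sa by auto

lemma fannes:
  fixes a b :: "nat \<Rightarrow> real"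
  assumes a0: "\<And>i. i < n \<Longrightarrow> 0 \<le> a i" and b0: "\<And>i. i < n \<Longrightarrow> 0 \<le> b i"
    and sa: "(\<Sum>i<n. a i) = 1" and sb: "(\<Sum>i<n. b i) = 1"
    and d: "(\<Sum>i<n. \<bar>a i - b i\<bar>) \<le> s" and s2: "s < 1/2"
  shows "\<bar>(\<Sum>i<n. eta (a i)) - (\<Sum>i<n. eta (b i))\<bar> \<le> s * (ln (real n) - ln s)"
proof -
  define t where "t i = \<bar>a i - b i\<bar>" for i
  define \<delta> where "\<delta> = (\<Sum>i<n. t i)"
  have "0 \<le> (\<Sum>i<n. \<bar>a i - b i\<bar>)" by (rule sum_nonneg) auto
  then have s0: "0 \<le> s" using d by linarith
  have n1: "n \<ge> 1" using sa by (cases n) auto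
  have a1: "a i \<le> 1" if "i < n" for i using le_one_of_sum[OF a0 sa that] by auto
  have b1: "b i \<le> 1" if "i < n" for i using le_one_of_sum[OF b0 sb that] by auto
  have t4: "t i \<le> 1/4" if "i < n" for i
  proof -
    have "2 * \<bar>a i - b i\<bar> \<le> s" using half_bound[OF sa sb that] d by (rule order_trans)
    then show ?thesis using s2 quarter_aux unfolding t_def by blast
  qed
  have t0: "0 \<le> t i" for i by (simp add: t_def)
  have main: "\<bar>(\<Sum>i<n. eta (a i)) - (\<Sum>i<n. eta (b i))\<bar> \<le> (\<Sum>i<n. eta (t i))"
  proof -
    have "\<bar>(\<Sum>i<n. eta (a i)) - (\<Sum>i<n. eta (b i))\<bar> = \<bar>\<Sum>i<n. eta (a i) - eta (b i)\<bar>"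
      by (simp add: sum_subtractf)
    also have "\<dots> \<le> (\<Sum>i<n. \<bar>eta (a i) - eta (b i)\<bar>)" by (rule sum_abs)
    also have "\<dots> \<le> (\<Sum>i<n. eta (t i))"
      by (rule sum_mono) (use eta_term a0 b0 a1 b1 t4 in \<open>auto simp: t_def\<close>)
    finally show ?thesis .
  qed
  have rhs0: "0 \<le> s * (ln (real n) - ln s)"
  proof -
    have "ln s \<le> 0" using s0 s2 by (cases "s = 0") auto
    moreover have "0 \<le> ln (real n)" using n1 by simp
    ultimately show ?thesis using s0 by simp
  qed
  show ?thesis
  proof (cases "n = 1")
    case True
    then have "a 0 = 1" "b 0 = 1" using sa sb by auto
    then show ?thesis using True rhs0 by simp
  next
    case False
    then have n2: "n \<ge> 2" using n1 by simp
    show ?thesis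
    proof (cases "s = 0")
      case True
      then have "\<delta> = 0" using d unfolding \<delta>_def t_def by (meson antisym s0 sum_nonneg abs_ge_zero) 
      then have "\<And>i. i < n \<Longrightarrow> t i = 0" unfolding \<delta>_def using t0 by (simp add: sum_nonneg_eq_0_iff)
      then have "(\<Sum>i<n. eta (t i)) = 0" by (simp add: eta_def)
      then show ?thesis using main rhs0 by linarith
    next
      case False
      then have sp: "0 < s" using s0 by simp
      define u where "u = s / real n"
      have up: "0 < u" using sp n2 by (simp add: u_def)
      have "(\<Sum>i<n. eta (t i)) \<le> (\<Sum>i<n. u - t i - t i * ln u)"
        by (rule sum_mono) (use eta_tangent[OF t0 up] in auto)
      also have "\<dots> = real n * u - \<delta> - \<delta> * ln u"
        by (simp add: sum_subtractf \<delta>_def sum_distrib_right)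
      also have "\<dots> = s - \<delta> - \<delta> * (ln s - ln (real n))"
        using sp n2 by (simp add: u_def ln_div)
      finally have 1: "(\<Sum>i<n. eta (t i)) \<le> s - \<delta> - \<delta> * (ln s - ln (real n))" .
      have K: "ln (real n) - ln s \<ge> 1"
      proof -
        have "ln (2::real) \<le> ln (real n)" using n2 by simp
        moreover have "ln s \<le> ln (1/2)" using sp s2 by simp
        moreover have "ln (1/2::real) = - ln 2" by (simp add: ln_div)
        ultimately show ?thesis using ln2_ge_two_thirds by linarith
      qed
      have ds: "\<delta> \<le> s" using d unfolding \<delta>_def t_def .
      have "0 \<le> (s - \<delta>) * (ln (real n) - ln s - 1)" using ds K by simp
      then have "s - \<delta> - \<delta> * (ln s - ln (real n)) \<le> s * (ln (real n) - ln s)"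
        by (simp add: algebra_simps)
      then show ?thesis using main 1 by linarith
    qed
  qed
qed



lemma holder:
  fixes d :: "nat \<Rightarrow> real" and p :: real
  assumes d0: "\<And>i. i < n \<Longrightarrow> 0 \<le> d i" and p1: "1 \<le> p"
  shows "(\<Sum>i<n. d i) \<le> real n powr (1 - 1/p) * (\<Sum>i<n. d i powr p) powr (1/p)"
proof -
  define S where "S = {i\<in>{..<n}. 0 < d i}"
  have finS: "finite S" by (simp add: S_def)
  have Ssub: "S \<subseteq> {..<n}" by (auto simp: S_def)
  have z: "d i = 0" if "i \<in> {..<n} - S" for i using d0[of i] that by (auto simp: S_def)
  have e1: "(\<Sum>i<n. d i) = (\<Sum>i\<in>S. d i)"
    by (rule sum.mono_neutral_right) (use z Ssub in auto)
  have e2: "(\<Sum>i<n. d i powr p) = (\<Sum>i\<in>S. d i powr p)"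
    by (rule sum.mono_neutral_right) (use z Ssub in auto)
  define P where "P = (\<Sum>i\<in>S. d i powr p)"
  have P0: "0 \<le> P" unfolding P_def by (rule sum_nonneg) simp
  show ?thesis
  proof (cases "S = {}")
    case True
    then show ?thesis using e1 by simp
  next
    case False
    define k where "k = card S"
    have kpos: "0 < k" using False finS by (simp add: k_def card_gt_0_iff)
    have kn: "k \<le> n" unfolding k_def using card_mono[OF _ Ssub] by simp
    have "(\<Sum>i\<in>S. (1 / real k) *\<^sub>R d i) powr p \<le> (\<Sum>i\<in>S. (1 / real k) * d i powr p)"
    proof (rule convex_on_sum[OF finS False powr_convex[OF p1]])
      show "(\<Sum>i\<in>S. 1 / real k) = 1" using kpos by (simp add: k_def)
    qed (auto simp: S_def)
    then have J: "((\<Sum>i\<in>S. d i) / k) powr p \<le> P / k"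
      by (simp add: P_def sum_divide_distrib[symmetric] sum_distrib_left[symmetric])
    define m where "m = (\<Sum>i\<in>S. d i) / k"
    have m0: "0 \<le> m" unfolding m_def by (intro divide_nonneg_nonneg sum_nonneg) (auto simp: S_def)
    have "m = (m powr p) powr (1/p)" using m0 p1 by (simp add: powr_powr)
    also have "\<dots> \<le> (P / k) powr (1/p)"
      using J m0 p1 by (intro powr_mono2) (auto simp: m_def)
    finally have mle: "m \<le> (P / k) powr (1/p)" .
    have "(\<Sum>i\<in>S. d i) = k * m" using kpos by (simp add: m_def)
    also have "\<dots> \<le> k * (P / k) powr (1/p)" using mle kpos by simp
    also have "\<dots> = real k powr (1 - 1/p) * P powr (1/p)"
      using kpos P0 by (simp add: powr_divide powr_diff)
    also have "\<dots> \<le> real n powr (1 - 1/p) * P powr (1/p)"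
      using kn kpos p1 by (intro mult_right_mono powr_mono2) auto
    finally show ?thesis using e1 e2 by (simp add: P_def)
  qed
qed



definition len :: "real \<times> real \<Rightarrow> real" where "len I = snd I - fst I"

lemma sum_nth_mset:
  fixes f :: "real \<times> real \<Rightarrow> real"
  shows "(\<Sum>i<length xs. f (xs ! i)) = (\<Sum>I\<in>#mset xs. f I)"
proof -
  have "(\<Sum>i<length xs. f (xs ! i)) = sum_list (map f xs)"
    by (simp add: sum_list_sum_nth atLeast0LessThan)
  also have "\<dots> = (\<Sum>I\<in>#mset xs. f I)"
    by (simp flip: sum_mset_sum_list)
  finally show ?thesis .
qed

lemma padded_sum:
  fixes f :: "real \<times> real \<Rightarrow> real"
  assumes "xs \<in> padded n A" and "\<And>t. f (t, t) = 0"
  shows "(\<Sum>i<n. f (xs ! i)) = (\<Sum>I\<in>#A. f I)"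
proof -
  obtain ts where l: "length xs = n" and m: "mset xs = A + mset (map (\<lambda>t. (t, t)) ts)"
    using assms(1) unfolding padded_def by auto
  have "(\<Sum>i<n. f (xs ! i)) = (\<Sum>I\<in>#mset xs. f I)" using sum_nth_mset[of f xs] l by simp
  also have "\<dots> = (\<Sum>I\<in>#A. f I) + (\<Sum>I\<in>#mset (map (\<lambda>t. (t, t)) ts). f I)"
    by (simp add: m)
  also have "(\<Sum>I\<in>#mset (map (\<lambda>t. (t, t)) ts). f I) = 0"
    by (induction ts) (auto simp: assms(2))
  finally show ?thesis by simp
qed

lemma padded_len:
  assumes "xs \<in> padded n A" "is_barcode A" "i < n"
  shows "0 \<le> len (xs ! i)"
proof -
  obtain ts where l: "length xs = n" and m: "mset xs = A + mset (map (\<lambda>t. (t, t)) ts)"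
    using assms(1) unfolding padded_def by auto
  have "xs ! i \<in># mset xs" using l assms(3) by simp
  then have "xs ! i \<in># A + mset (map (\<lambda>t. (t, t)) ts)" by (simp only: m)
  then show ?thesis using assms(2) unfolding is_barcode_def len_def by auto
qed

lemma padded_total:
  assumes "xs \<in> padded n A"
  shows "(\<Sum>i<n. len (xs ! i)) = total_length A"
  using padded_sum[OF assms, of len] by (simp add: len_def total_length_def)

lemma sum_mset_uminus: "(\<Sum>x\<in>#A. - f x) = - (\<Sum>x\<in>#A. (f x :: real))"
  by (induction A) auto

lemma padded_entropy:
  assumes "xs \<in> padded n A"
  shows "pers_entropy A = (\<Sum>i<n. eta (len (xs ! i) / total_length A))"
proof -
  have "(\<Sum>i<n. eta (len (xs ! i) / total_length A)) = (\<Sum>I\<in>#A. eta (len I / total_length A))"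
    by (rule padded_sum[OF assms]) (simp add: len_def eta_def)
  also have "\<dots> = pers_entropy A"
  proof -
    have f: "\<And>I. (let q = (snd I - fst I) / total_length A in if q = 0 then 0 else q * ln q)
        = - eta (len I / total_length A)" by (simp add: Let_def eta_def len_def)
    show ?thesis unfolding pers_entropy_def f sum_mset_uminus by simp
  qed
  finally show ?thesis by simp
qed

lemma len_int_dist: "\<bar>len I - len J\<bar> \<le> 2 * int_dist I J"
proof -
  have "len I - len J = (snd I - snd J) - (fst I - fst J)" by (simp add: len_def)
  then have "\<bar>len I - len J\<bar> \<le> \<bar>snd I - snd J\<bar> + \<bar>fst I - fst J\<bar>"
    using abs_triangle_ineq4 by metis
  moreover have "\<bar>snd I - snd J\<bar> \<le> int_dist I J" "\<bar>fst I - fst J\<bar> \<le> int_dist I J"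
    by (auto simp: int_dist_def)
  ultimately show ?thesis by linarith
qed

lemma norm_l1:
  fixes \<alpha> \<beta> :: "nat \<Rightarrow> real"
  assumes b0: "\<And>i. i < n \<Longrightarrow> 0 \<le> \<beta> i"
    and sa: "(\<Sum>i<n. \<alpha> i) = LA" and sb: "(\<Sum>i<n. \<beta> i) = LB" and "0 < LA" "0 < LB"
  shows "(\<Sum>i<n. \<bar>\<alpha> i / LA - \<beta> i / LB\<bar>) \<le> 2 * (\<Sum>i<n. \<bar>\<alpha> i - \<beta> i\<bar>) / LA"
proof -
  have "(\<Sum>i<n. \<bar>\<alpha> i / LA - \<beta> i / LB\<bar>)
      \<le> (\<Sum>i<n. \<bar>\<alpha> i - \<beta> i\<bar> / LA + \<beta> i * \<bar>1/LA - 1/LB\<bar>)"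
  proof (rule sum_mono)
    fix i assume "i \<in> {..<n}"
    then have bi: "0 \<le> \<beta> i" using b0 by auto
    have "\<alpha> i / LA - \<beta> i / LB = (\<alpha> i - \<beta> i) / LA + \<beta> i * (1/LA - 1/LB)"
      using assms(4,5) by (simp add: field_simps)
    also have "\<bar>\<dots>\<bar> \<le> \<bar>(\<alpha> i - \<beta> i) / LA\<bar> + \<bar>\<beta> i * (1/LA - 1/LB)\<bar>" by (rule abs_triangle_ineq)
    also have "\<dots> = \<bar>\<alpha> i - \<beta> i\<bar> / LA + \<beta> i * \<bar>1/LA - 1/LB\<bar>"
      using bi \<open>0 < LA\<close> by (simp add: abs_mult)
    finally show "\<bar>\<alpha> i / LA - \<beta> i / LB\<bar> \<le> \<bar>\<alpha> i - \<beta> i\<bar> / LA + \<beta> i * \<bar>1/LA - 1/LB\<bar>" .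
  qed
  also have "\<dots> = (\<Sum>i<n. \<bar>\<alpha> i - \<beta> i\<bar>) / LA + LB * \<bar>1/LA - 1/LB\<bar>"
  proof -
    have "(\<Sum>i<n. \<beta> i * \<bar>1/LA - 1/LB\<bar>) = LB * \<bar>1/LA - 1/LB\<bar>"
      using sb by (simp flip: sum_distrib_right)
    then show ?thesis by (simp add: sum.distrib sum_divide_distrib)
  qed
  also have "LB * \<bar>1/LA - 1/LB\<bar> = \<bar>LA - LB\<bar> / LA"
  proof -
    have "LB * \<bar>1/LA - 1/LB\<bar> = \<bar>LB * (1/LA - 1/LB)\<bar>" using \<open>0 < LB\<close> by (simp add: abs_mult)
    also have "LB * (1/LA - 1/LB) = (LB - LA) / LA" using assms(4,5) by (simp add: field_simps)
    finally show ?thesis using assms(4) by (simp add: abs_minus_commute)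
  qed
  also have "\<bar>LA - LB\<bar> \<le> (\<Sum>i<n. \<bar>\<alpha> i - \<beta> i\<bar>)"
  proof -
    have "LA - LB = (\<Sum>i<n. \<alpha> i - \<beta> i)" using sa sb by (simp add: sum_subtractf)
    then show ?thesis by (simp add: sum_abs)
  qed
  finally show ?thesis using assms(4) by (simp add: divide_right_mono field_simps)
qed



lemma matching_bound:
  assumes bA: "is_barcode A" and bB: "is_barcode B"
    and LA: "total_length A > 0" and LB: "total_length B > 0"
    and xs: "xs \<in> padded n A" and ys: "ys \<in> padded n B"
    and g: "bij_betw \<gamma> {..<n} {..<n}"
    and sD: "4 * (\<Sum>i<n. int_dist (xs ! i) (ys ! \<gamma> i)) / L_max A B \<le> s" and s2: "s < 1/2"
  shows "\<bar>pers_entropy A - pers_entropy B\<bar> \<le> s * (ln (real n) - ln s)"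
proof -
  define \<alpha> where "\<alpha> i = len (xs ! i)" for i
  define \<beta> where "\<beta> i = len (ys ! \<gamma> i)" for i
  define a where "a i = \<alpha> i / total_length A" for i
  define b where "b i = \<beta> i / total_length B" for i
  have gi: "\<gamma> i < n" if "i < n" for i using g that by (auto dest: bij_betw_apply)
  have a0: "0 \<le> \<alpha> i" if "i < n" for i using padded_len[OF xs bA that] by (simp add: \<alpha>_def)
  have b0: "0 \<le> \<beta> i" if "i < n" for i using padded_len[OF ys bB gi[OF that]] by (simp add: \<beta>_def)
  have sa: "(\<Sum>i<n. \<alpha> i) = total_length A" using padded_total[OF xs] by (simp add: \<alpha>_def)
  have sb: "(\<Sum>i<n. \<beta> i) = total_length B"
    using padded_total[OF ys] sum.reindex_bij_betw[OF g, of "\<lambda>j. len (ys ! j)"] by (simp add: \<beta>_def)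
  have HA: "pers_entropy A = (\<Sum>i<n. eta (a i))" using padded_entropy[OF xs] by (simp add: a_def \<alpha>_def)
  have HB: "pers_entropy B = (\<Sum>i<n. eta (b i))"
    using padded_entropy[OF ys] sum.reindex_bij_betw[OF g, of "\<lambda>j. eta (len (ys ! j) / total_length B)"]
    by (simp add: b_def \<beta>_def)
  have sa1: "(\<Sum>i<n. a i) = 1" using sa LA by (simp add: a_def flip: sum_divide_distrib)
  have sb1: "(\<Sum>i<n. b i) = 1" using sb LB by (simp add: b_def flip: sum_divide_distrib)
  have ab0: "\<And>i. i < n \<Longrightarrow> 0 \<le> a i" "\<And>i. i < n \<Longrightarrow> 0 \<le> b i"
    using a0 b0 LA LB by (auto simp: a_def b_def)
  have Lpos: "0 < L_max A B" using LA by (simp add: L_max_def)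
  have l1: "(\<Sum>i<n. \<bar>a i - b i\<bar>) \<le> 2 * (\<Sum>i<n. \<bar>\<alpha> i - \<beta> i\<bar>) / L_max A B"
  proof (cases "total_length B \<le> total_length A")
    case True
    then show ?thesis using norm_l1[OF b0 sa sb LA LB] by (simp add: a_def b_def L_max_def)
  next
    case False
    have "(\<Sum>i<n. \<bar>\<beta> i / total_length B - \<alpha> i / total_length A\<bar>)
        \<le> 2 * (\<Sum>i<n. \<bar>\<beta> i - \<alpha> i\<bar>) / total_length B"
      using norm_l1[OF a0 sb sa LB LA] by simp
    then show ?thesis using False by (simp add: a_def b_def L_max_def abs_minus_commute)
  qed
  have "(\<Sum>i<n. \<bar>\<alpha> i - \<beta> i\<bar>) \<le> (\<Sum>i<n. 2 * int_dist (xs ! i) (ys ! \<gamma> i))"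
    by (rule sum_mono) (simp add: \<alpha>_def \<beta>_def len_int_dist)
  then have "2 * (\<Sum>i<n. \<bar>\<alpha> i - \<beta> i\<bar>) / L_max A B \<le> 4 * (\<Sum>i<n. int_dist (xs ! i) (ys ! \<gamma> i)) / L_max A B"
    using Lpos by (simp add: divide_right_mono sum_distrib_left[symmetric])
  then have "(\<Sum>i<n. \<bar>a i - b i\<bar>) \<le> s" using l1 sD by linarith
  then show ?thesis using fannes[OF ab0 sa1 sb1 _ s2] HA HB by simp
qed



lemma padded_nonempty:
  assumes "size A \<le> n"
  shows "\<exists>xs. xs \<in> padded n A"
proof -
  obtain xs0 where x0: "mset xs0 = A" using ex_mset by blast
  define k where "k = n - size A"
  define xs where "xs = xs0 @ replicate k (0::real, 0::real)"
  have "length xs = n" using assms x0 by (simp add: xs_def k_def flip: size_mset)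
  moreover have "mset xs = A + mset (map (\<lambda>t. (t, t)) (replicate k (0::real)))"
    by (simp add: xs_def x0)
  ultimately show ?thesis unfolding padded_def by blast
qed

lemma limit_step:
  fixes X c :: real
  assumes r0: "0 \<le> c" and c2: "c < 1/2"
    and H: "\<And>s. c < s \<Longrightarrow> s < 1/2 \<Longrightarrow> X \<le> s * (ln m - ln s)"
  shows "X \<le> c * (ln m - ln c)"
proof -
  have lim: "((\<lambda>s. s * (ln m - ln s)) \<longlongrightarrow> c * (ln m - ln c)) (at_right c)"
  proof (cases "c = 0")
    case True
    then show ?thesis by simp real_asymp
  next
    case False
    then have "((\<lambda>s. s * (ln m - ln s)) \<longlongrightarrow> c * (ln m - ln c)) (at c)"
      by (intro tendsto_intros) auto
    then show ?thesis by (rule tendsto_mono[rotated]) (simp add: at_le)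
  qed
  have ev: "eventually (\<lambda>s. X \<le> s * (ln m - ln s)) (at_right c)"
    using eventually_at_right_real[OF c2] by eventually_elim (use H in auto)
  show ?thesis
    by (rule tendsto_le[OF _ lim tendsto_const ev]) simp
qed



theorem theorem4:
  fixes p :: ereal and A B :: barcode
  assumes "1 \<le> p"
    and "is_barcode A" and "is_barcode B"
    and "total_length A > 0" and "total_length B > 0"
    and "rel_err p A B < 1 / 4"
  shows "\<bar>pers_entropy A - pers_entropy B\<bar>
           \<le> 2 * rel_err p A B * (ln (real (n_max A B)) - ln (2 * rel_err p A B))"
proof -
  note p1 = assms(1) and bA = assms(2) and bB = assms(3) and LA = assms(4) and LB = assms(5)
  define n where "n = n_max A B"
  define L where "L = L_max A B"
  define r where "r = rel_err p A B"
  define X where "X = \<bar>pers_entropy A - pers_entropy B\<bar>"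
  have szA: "size A \<le> n" and szB: "size B \<le> n" by (auto simp: n_def n_max_def)
  have "A \<noteq> {#}" using LA by (auto simp: total_length_def)
  then have n1: "1 \<le> n" using szA by (cases A) auto
  have Lpos: "0 < L" using LA by (simp add: L_def L_max_def)
  obtain xs0 where xs0: "xs0 \<in> padded n A" using padded_nonempty[OF szA] by blast
  obtain ys0 where ys0: "ys0 \<in> padded n B" using padded_nonempty[OF szB] by blast
  have bid: "bij_betw id {..<n} {..<n}" by simp
  have dnn: "0 \<le> int_dist I J" for I J by (simp add: int_dist_def)
  have MB: "\<And>xs ys \<gamma>. xs \<in> padded n A \<Longrightarrow> ys \<in> padded n B \<Longrightarrow> bij_betw \<gamma> {..<n} {..<n} \<Longrightarrow>
      \<forall>s. 4 * (\<Sum>i<n. int_dist (xs ! i) (ys ! \<gamma> i)) / L \<le> s \<longrightarrow> s < 1/2 \<longrightarrow> X \<le> s * (ln (real n) - ln s)"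
    using matching_bound[OF bA bB LA LB] unfolding X_def L_def by blast
  have main: "0 \<le> r \<and> (\<forall>s. 2 * r < s \<longrightarrow> s < 1/2 \<longrightarrow> X \<le> s * (ln (real n) - ln s))"
  proof (cases "p = \<infinity>")
    case True
    define T where "T = {(MAX i\<in>{..<n}. int_dist (xs ! i) (ys ! \<gamma> i)) | xs ys \<gamma>.
              xs \<in> padded n A \<and> ys \<in> padded n B \<and> bij_betw \<gamma> {..<n} {..<n}}"
    have W: "wdist p A B = Inf T" using True by (simp add: wdist_def wasserstein_inf_def T_def n_def Let_def)
    have r_eq: "r = 2 * real n * Inf T / L" using True W by (simp add: r_def rel_err_def n_def L_def)
    have Tne: "T \<noteq> {}" using xs0 ys0 bid unfolding T_def by blast
    have Tnn: "0 \<le> t" if tT: "t \<in> T" for t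
    proof -
      obtain xs ys \<gamma> where "t = (MAX i\<in>{..<n}. int_dist (xs ! i) (ys ! \<gamma> i))"
        using tT unfolding T_def by blast
      moreover have "int_dist (xs ! 0) (ys ! \<gamma> 0) \<le> (MAX i\<in>{..<n}. int_dist (xs ! i) (ys ! \<gamma> i))"
        using n1 by (intro Max_ge) auto
      ultimately show ?thesis using dnn by (meson order_trans)
    qed
    have W0: "0 \<le> Inf T" using Tne Tnn by (intro cInf_greatest) auto
    have r0: "0 \<le> r" using r_eq W0 Lpos by simp
    show ?thesis
    proof (intro conjI r0 allI impI)
      fix s assume s1: "2 * r < s" and s2: "s < 1/2"
      define \<tau> where "\<tau> = s * L / (4 * real n)"
      have "Inf T < \<tau>" using s1 r_eq Lpos n1 by (simp add: \<tau>_def field_simps)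
      then obtain M where "M \<in> T" "M < \<tau>" using cInf_lessD[OF Tne] by blast
      then obtain xs ys \<gamma> where M: "M = (MAX i\<in>{..<n}. int_dist (xs ! i) (ys ! \<gamma> i))"
        and xs: "xs \<in> padded n A" and ys: "ys \<in> padded n B" and g: "bij_betw \<gamma> {..<n} {..<n}"
        and Mt: "M < \<tau>"
        unfolding T_def by blast
      have "(\<Sum>i<n. int_dist (xs ! i) (ys ! \<gamma> i)) \<le> real (card {..<n}) * M"
        by (rule sum_bounded_above) (auto simp: M intro!: Max_ge)
      then have D: "(\<Sum>i<n. int_dist (xs ! i) (ys ! \<gamma> i)) \<le> real n * M" by simp
      have "4 * (\<Sum>i<n. int_dist (xs ! i) (ys ! \<gamma> i)) / L \<le> 4 * (real n * M) / L"
        using D Lpos by (intro divide_right_mono) auto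
      also have "\<dots> \<le> 4 * (real n * \<tau>) / L"
        using Mt Lpos n1 by (intro divide_right_mono mult_left_mono) auto
      also have "\<dots> = s" using Lpos n1 by (simp add: \<tau>_def field_simps)
      finally show "X \<le> s * (ln (real n) - ln s)" using MB[OF xs ys g] s2 by blast
    qed
  next
    case False
    define q where "q = real_of_ereal p"
    have pq: "p = ereal q" using False p1 unfolding q_def by (cases p) auto
    have q1: "1 \<le> q" using p1 pq by simp
    define T where "T = {(\<Sum>i<n. (int_dist (xs ! i) (ys ! \<gamma> i)) powr q) | xs ys \<gamma>.
              xs \<in> padded n A \<and> ys \<in> padded n B \<and> bij_betw \<gamma> {..<n} {..<n}}"
    have W: "wdist p A B = Inf T powr (1/q)"
      using False by (simp add: wdist_def wasserstein_def T_def n_def Let_def q_def)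
    define N where "N = real n powr (1 - 1/q)"
    have Npos: "0 < N" using n1 by (simp add: N_def)
    have r_eq: "r = 2 * N * Inf T powr (1/q) / L"
      using False W by (simp add: r_def rel_err_def n_def L_def N_def q_def)
    have Tne: "T \<noteq> {}" using xs0 ys0 bid unfolding T_def by blast
    have Tnn: "0 \<le> t" if "t \<in> T" for t
      using that unfolding T_def by (auto intro!: sum_nonneg)
    have W0: "0 \<le> Inf T" using Tne Tnn by (intro cInf_greatest) auto
    have r0: "0 \<le> r" using r_eq Npos Lpos by simp
    show ?thesis
    proof (intro conjI r0 allI impI)
      fix s assume s1: "2 * r < s" and s2: "s < 1/2"
      define \<tau> where "\<tau> = s * L / (4 * N)"
      have Wt: "Inf T powr (1/q) < \<tau>" using s1 r_eq Lpos Npos by (simp add: \<tau>_def field_simps)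
      have tpos: "0 < \<tau>" using Wt by (meson le_less_trans powr_ge_zero)
      have "Inf T = (Inf T powr (1/q)) powr q" using W0 q1 by (simp add: powr_powr)
      also have "\<dots> < \<tau> powr q" using Wt q1 by (intro powr_less_mono2) auto
      finally obtain c where "c \<in> T" "c < \<tau> powr q" using cInf_lessD[OF Tne] by blast
      then obtain xs ys \<gamma> where c: "c = (\<Sum>i<n. (int_dist (xs ! i) (ys ! \<gamma> i)) powr q)"
        and xs: "xs \<in> padded n A" and ys: "ys \<in> padded n B" and g: "bij_betw \<gamma> {..<n} {..<n}"
        and ct: "c < \<tau> powr q"
        unfolding T_def by blast
      have c0: "0 \<le> c" unfolding c by (auto intro!: sum_nonneg)
      have "c powr (1/q) < (\<tau> powr q) powr (1/q)" using ct c0 q1 by (intro powr_less_mono2) auto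
      also have "\<dots> = \<tau>" using tpos q1 by (simp add: powr_powr)
      finally have ct': "c powr (1/q) < \<tau>" .
      have "(\<Sum>i<n. int_dist (xs ! i) (ys ! \<gamma> i)) \<le> N * c powr (1/q)"
        unfolding N_def c by (rule holder[OF dnn q1])
      also have "\<dots> \<le> N * \<tau>" using ct' Npos by simp
      finally have D: "(\<Sum>i<n. int_dist (xs ! i) (ys ! \<gamma> i)) \<le> N * \<tau>" .
      have "4 * (\<Sum>i<n. int_dist (xs ! i) (ys ! \<gamma> i)) / L \<le> 4 * (N * \<tau>) / L"
        using D Lpos by (intro divide_right_mono) auto
      also have "\<dots> = s" using Lpos Npos by (simp add: \<tau>_def field_simps)
      finally show "X \<le> s * (ln (real n) - ln s)" using MB[OF xs ys g] s2 by blast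
    qed
  qed
  have r4: "2 * r < 1/2" using assms(6) r_def by simp
  have "X \<le> (2 * r) * (ln (real n) - ln (2 * r))"
    by (rule limit_step) (use main r4 in auto)
  then show ?thesis by (simp add: X_def r_def n_def)
qed

end
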